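(* In the mechanism \textsc{SeqTGreedy} (defined in the context) with any budget $\mathcal{B}>0$ and parameter $\alpha\ge1$, the payments are individually rational: every selected participant $s\in\mathcal{S}$ receives $\theta_s\ge b_s$.
   Context: Setting. $\mathcal{V}$ is a finite set and $f:2^{\mathcal{V}}\to\mathbb{R}_{\ge0}$ is monotone and submodular. $\mathcal{W}$ is a finite set of $N$ users and $\mathcal{O}\subseteq 2^{\mathcal{V}}$. Each user $w$ has a random sensing profile $Y_w$ with values in $\mathcal{O}$; the $Y_w$ are independent with known distributions, $\mathbf{Y}_{\mathcal{W}}=(Y_w)_{w\in\mathcal{W}}$. For $\mathcal{S}\subseteq\mathcal{W}$ and values $y_s$, write $\mathbf{y}_{\mathcal{S}}=\{(s,y_s):s\in\mathcal{S}\}$ and $g(\mathbf{y}_{\mathcal{S}})=f(\bigcup_{s\in\mathcal{S}}y_s)$. The conditional expected marginal gain is $\Delta_g(w\mid\mathbf{y}_{\mathcal{S}})=\sum_{y\in\mathcal{O}}P(Y_w=y\mid\mathbf{y}_{\mathcal{S}})\,[g(\mathbf{y}_{\mathcal{S}}\cup\{(w,y)\})-g(\mathbf{y}_{\mathcal{S}})]$. Each user $w$ reports a bid $b_w\ge0$. Allocation policy of \textsc{SeqTGreedy}. Set $\mathcal{S}=\emptyset$, $\mathbf{y}_{\mathcal{S}}=\emptyset$, $\mathcal{W}'=\mathcal{W}$. While $\mathcal{W}'\ne\emptyset$: let $w^*\in\arg\max_{w\in\mathcal{W}'}\Delta_g(w\mid\mathbf{y}_{\mathcal{S}})/b_w$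 and $\Delta_{w^*}=\Delta_g(w^*\mid\mathbf{y}_{\mathcal{S}})$. If $\sum_{s\in\mathcal{S}}b_s+b_{w^*}\le\mathcal{B}$: if moreover $b_{w^*}\le\frac{\mathcal{B}}{\alpha}\cdot\frac{\Delta_{w^*}}{\sum_{s\in\mathcal{S}}\Delta_s+\Delta_{w^*}}$ then add $w^*$ to $\mathcal{S}$ (recording $\Delta_{w^*}$), observe the realization $y_{w^*}$ of $Y_{w^*}$, add $(w^*,y_{w^*})$ to $\mathbf{y}_{\mathcal{S}}$, remove $w^*$ from $\mathcal{W}'$; otherwise stop. If the budget test fails, remove $w^*$ from $\mathcal{W}'$. For a fixed full realization $\mathbf{y}_{\mathcal{W}}$ the run is deterministic. Payments. Fix a realization $\mathbf{y}_{\mathcal{W}}$ and bids; let $\mathcal{S}=\{1,\dots,k\}$ be the selected users in order. For $i\in\mathcal{S}$, run the policy on $\mathcal{W}\setminus\{i\}$ with the same bids and realization, obtaining $\mathcal{S}'=\{1,\dots,k'\}$ in order with recorded marginals $\Delta'_j$; index $k'+1$ refers to the next (first unallocated) user considered by this run. For $j\in\{1,\dots,k'+1\}$ let $\Delta_{i(j)}$ be the expected marginal gain of $i$ given the observations of users $1,\dots,j-1$ of $\mathcal{S}'$, $b_{i(j)}=\Delta_{i(j)}b_j/\Delta'_j$, $\rho_{i(j)}=\frac{\mathcal{B}}{\alpha}\cdot\frac{\Delta_{i(j)}}{\sum_{s'=1}^{j-1}\Delta'_{s'}+\Delta_{i(j)}}$, $\theta^d_{i(j)}=\min(b_{i(j)},\rho_{i(j)})$,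 $\theta^d_i(\mathbf{y}_{\mathcal{W}})=\max_{j}\theta^d_{i(j)}$. In the actual run selecting $\mathcal{S}$ with observations $\mathbf{y}_{\mathcal{S}}$, the payment to $s\in\mathcal{S}$ is $\theta_s=\sum_{\mathbf{y}^r}P(\mathbf{Y}_{\mathcal{W}}=\mathbf{y}^r\mid\mathbf{y}_{\mathcal{S}})\,\theta^d_s(\mathbf{y}^r)$ over all full realizations $\mathbf{y}^r\supseteq\mathbf{y}_{\mathcal{S}}$. *)

theory Defs
  imports "HOL-Probability.Probability_Mass_Function"
begin

definition monotone_set_fun :: "'v set \<Rightarrow> ('v set \<Rightarrow> real) \<Rightarrow> bool" where
  "monotone_set_fun V f \<longleftrightarrow> (\<forall>A B. A \<subseteq> B \<and> B \<subseteq> V \<longrightarrow> f A \<le> f B)"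

definition submodular :: "'v set \<Rightarrow> ('v set \<Rightarrow> real) \<Rightarrow> bool" where
  "submodular V f \<longleftrightarrow>
     (\<forall>A B x. A \<subseteq> B \<and> B \<subseteq> V \<and> x \<in> V - B \<longrightarrow>
        f (insert x A) - f A \<ge> f (insert x B) - f B)"

text \<open>Full realizations: every user in W gets a profile in Obs (values outside W are fixed
  to the empty set, an irrelevant normalisation).\<close>

definition realizations :: "'w set \<Rightarrow> 'v set set \<Rightarrow> ('w \<Rightarrow> 'v set) set" where
  "realizations W Obs = {r. (\<forall>w\<in>W. r w \<in> Obs) \<and> (\<forall>w. w \<notin> W \<longrightarrow> r w = {})}"

definition real_prob :: "('w \<Rightarrow> 'v set pmf) \<Rightarrow> 'w set \<Rightarrow> ('w \<Rightarrow> 'v set) \<Rightarrow> real" where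
  "real_prob D W r = (\<Prod>w\<in>W. pmf (D w) (r w))"

text \<open>Partial observations y_S are partial maps from users to observed profiles.\<close>

definition consistent :: "('w \<rightharpoonup> 'v set) \<Rightarrow> ('w \<Rightarrow> 'v set) \<Rightarrow> bool" where
  "consistent ob r \<longleftrightarrow> (\<forall>w\<in>dom ob. ob w = Some (r w))"

definition cond_prob ::
  "('w \<Rightarrow> 'v set pmf) \<Rightarrow> 'w set \<Rightarrow> 'v set set \<Rightarrow> ('w \<rightharpoonup> 'v set) \<Rightarrow> (('w \<Rightarrow> 'v set) \<Rightarrow> bool) \<Rightarrow> real" where
  "cond_prob D W Obs ob E =
     (\<Sum>r\<in>{r\<in>realizations W Obs. consistent ob r \<and> E r}. real_prob D W r) /
     (\<Sum>r\<in>{r\<in>realizations W Obs. consistent ob r}. real_prob D W r)"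

definition g_val :: "('v set \<Rightarrow> real) \<Rightarrow> ('w \<rightharpoonup> 'v set) \<Rightarrow> real" where
  "g_val f ob = f (\<Union> (ran ob))"

definition cond_gain ::
  "('v set \<Rightarrow> real) \<Rightarrow> ('w \<Rightarrow> 'v set pmf) \<Rightarrow> 'w set \<Rightarrow> 'v set set \<Rightarrow> 'w \<Rightarrow> ('w \<rightharpoonup> 'v set) \<Rightarrow> real" where
  "cond_gain f D W Obs w ob =
     (\<Sum>y\<in>Obs. cond_prob D W Obs ob (\<lambda>r. r w = y) * (g_val f (ob(w \<mapsto> y)) - g_val f ob))"

record 'w mstate =
  rem :: "'w set"
  selL :: "('w \<times> real) list"   \<comment> \<open>selected users in order, with recorded marginal gains\<close>
  halted :: bool
  stopu :: "'w option"           \<comment> \<open>user at which the run stopped (None: candidates exhausted)\<close>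

definition obs_of :: "('w \<Rightarrow> 'v set) \<Rightarrow> ('w \<times> real) list \<Rightarrow> ('w \<rightharpoonup> 'v set)" where
  "obs_of y L = (\<lambda>w. if w \<in> fst ` set L then Some (y w) else None)"

definition greedy_step ::
  "('v set \<Rightarrow> real) \<Rightarrow> ('w::linorder \<Rightarrow> 'v set pmf) \<Rightarrow> 'w set \<Rightarrow> 'v set set \<Rightarrow> ('w \<Rightarrow> real)
    \<Rightarrow> real \<Rightarrow> real \<Rightarrow> ('w \<Rightarrow> 'v set) \<Rightarrow> 'w mstate \<Rightarrow> 'w mstate" where
  "greedy_step f D W Obs b B \<alpha> y st =
    (if halted st then st
     else if rem st = {} then st\<lparr>halted := True, stopu := None\<rparr>
     else
       (let ob = obs_of y (selL st);
            ratio = (\<lambda>w. cond_gain f D W Obs w ob / b w);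
            ws = (LEAST w. w \<in> rem st \<and> (\<forall>u\<in>rem st. ratio u \<le> ratio w));
            dws = cond_gain f D W Obs ws ob
        in if sum_list (map (\<lambda>(s, _). b s) (selL st)) + b ws \<le> B then
             (if b ws \<le> B / \<alpha> * (dws / (sum_list (map snd (selL st)) + dws))
              then st\<lparr>selL := selL st @ [(ws, dws)], rem := rem st - {ws}\<rparr>
              else st\<lparr>halted := True, stopu := Some ws\<rparr>)
           else st\<lparr>rem := rem st - {ws}\<rparr>))"

text \<open>Run of the policy with candidate set C (the probability space is always over all of W).
  Each non-final step removes a candidate or halts, so card C + 1 steps suffice.\<close>
definition run ::
  "('v set \<Rightarrow> real) \<Rightarrow> ('w::linorder \<Rightarrow> 'v set pmf) \<Rightarrow> 'w set \<Rightarrow> 'v set set \<Rightarrow> ('w \<Rightarrow> real)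
    \<Rightarrow> real \<Rightarrow> real \<Rightarrow> ('w \<Rightarrow> 'v set) \<Rightarrow> 'w set \<Rightarrow> 'w mstate" where
  "run f D W Obs b B \<alpha> y C =
     (greedy_step f D W Obs b B \<alpha> y ^^ (card C + 1))
       \<lparr>rem = C, selL = [], halted = False, stopu = None\<rparr>"

text \<open>theta^d_i(y): index m = 0..k' corresponds to j = m+1 in the paper; m = k' is the
  (k'+1)-th, i.e. the user at which the run on W - {i} stopped.  If that run exhausted its
  candidates (no such user) or the relevant marginal Delta'_j is 0, b_{i(j)} is read as
  +infinity, i.e. theta^d_{i(j)} = rho_{i(j)}.\<close>
definition theta_d ::
  "('v set \<Rightarrow> real) \<Rightarrow> ('w::linorder \<Rightarrow> 'v set pmf) \<Rightarrow> 'w set \<Rightarrow> 'v set set \<Rightarrow> ('w \<Rightarrow> real)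
    \<Rightarrow> real \<Rightarrow> real \<Rightarrow> 'w \<Rightarrow> ('w \<Rightarrow> 'v set) \<Rightarrow> real" where
  "theta_d f D W Obs b B \<alpha> i y =
    (let st = run f D W Obs b B \<alpha> y (W - {i});
         L = selL st;
         k = length L;
         ob = (\<lambda>m. obs_of y (take m L));
         Di = (\<lambda>m. cond_gain f D W Obs i (ob m));
         rho = (\<lambda>m. B / \<alpha> * (Di m / (sum_list (map snd (take m L)) + Di m)));
         nxt = (\<lambda>m. if m < k then Some (L ! m)
                    else (case stopu st of None \<Rightarrow> None
                          | Some u \<Rightarrow> Some (u, cond_gain f D W Obs u (ob k))));
         th = (\<lambda>m. case nxt m of
                      None \<Rightarrow> rho m
                    | Some (j, dj) \<Rightarrow> (if dj > 0 then min (Di m * b j / dj) (rho m) else rho m))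
     in Max (th ` {0..k}))"

definition payment ::
  "('v set \<Rightarrow> real) \<Rightarrow> ('w::linorder \<Rightarrow> 'v set pmf) \<Rightarrow> 'w set \<Rightarrow> 'v set set \<Rightarrow> ('w \<Rightarrow> real)
    \<Rightarrow> real \<Rightarrow> real \<Rightarrow> 'w \<Rightarrow> ('w \<Rightarrow> 'v set) \<Rightarrow> real" where
  "payment f D W Obs b B \<alpha> s y =
    (let ob = obs_of y (selL (run f D W Obs b B \<alpha> y W))
     in \<Sum>r\<in>{r\<in>realizations W Obs. consistent ob r}.
          cond_prob D W Obs ob (\<lambda>x. x = r) * theta_d f D W Obs b B \<alpha> s r)"

end

theory Submission
  imports Defs
begin

context
  fixes f :: "'v set \<Rightarrow> real" and D :: "'w::linorder \<Rightarrow> 'v set pmf" and W :: "'w set"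
    and Obs :: "'v set set" and b :: "'w \<Rightarrow> real" and B \<alpha> :: real and r :: "'w \<Rightarrow> 'v set"
begin

abbreviation "stp \<equiv> greedy_step f D W Obs b B \<alpha> r"
abbreviation "dg st w \<equiv> cond_gain f D W Obs w (obs_of r (selL st))"
abbreviation "rat st w \<equiv> dg st w / b w"
abbreviation "pk st \<equiv> (LEAST w. w \<in> rem st \<and> (\<forall>u\<in>rem st. rat st u \<le> rat st w))"
abbreviation "sel st \<equiv> fst ` set (selL st)"

lemma stp_eq: "stp st = (if halted st then st else if rem st = {} then st\<lparr>halted := True, stopu := None\<rparr>
  else if sum_list (map (\<lambda>(s, _). b s) (selL st)) + b (pk st) \<le> B then
    (if b (pk st) \<le> B / \<alpha> * (dg st (pk st) / (sum_list (map snd (selL st)) + dg st (pk st)))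
     then st\<lparr>selL := selL st @ [(pk st, dg st (pk st))], rem := rem st - {pk st}\<rparr>
     else st\<lparr>halted := True, stopu := Some (pk st)\<rparr>)
  else st\<lparr>rem := rem st - {pk st}\<rparr>)"
  by (simp add: greedy_step_def Let_def)

lemma pk_prop0:
  assumes "finite (rem st)" "rem st \<noteq> {}"
  shows "pk st \<in> {w \<in> rem st. \<forall>u\<in>rem st. rat st u \<le> rat st w} \<and>
    (\<forall>w \<in> {w \<in> rem st. \<forall>u\<in>rem st. rat st u \<le> rat st w}. pk st \<le> w)"
proof -
  let ?M = "{w \<in> rem st. \<forall>u\<in>rem st. rat st u \<le> rat st w}"
  have "Max (rat st ` rem st) \<in> rat st ` rem st" using Max_in assms by auto
  then obtain w where w: "w \<in> rem st" "rat st w = Max (rat st ` rem st)" by auto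
  have "w \<in> ?M" using w assms by auto
  then have fM: "finite ?M" "?M \<noteq> {}" using assms by auto
  have "pk st = Min ?M"
  proof (rule Least_equality)
    show "Min ?M \<in> rem st \<and> (\<forall>u\<in>rem st. rat st u \<le> rat st (Min ?M))"
      using Min_in[OF fM] by auto
  next
    fix y assume "y \<in> rem st \<and> (\<forall>u\<in>rem st. rat st u \<le> rat st y)"
    then show "Min ?M \<le> y" using fM by auto
  qed
  then show ?thesis using Min_in[OF fM] fM by auto
qed

lemma pk_prop:
  assumes "finite (rem st)" "rem st \<noteq> {}"
  shows "pk st \<in> rem st \<and> (\<forall>u\<in>rem st. rat st u \<le> rat st (pk st))"
  using pk_prop0[OF assms] by blast

lemma stp_rem: "rem (stp st) \<subseteq> rem st"
  by (auto simp: stp_eq Let_def)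

lemma stp_sel: "finite (rem st) \<Longrightarrow> rem (stp st) \<union> sel (stp st) \<subseteq> rem st \<union> sel st"
  using pk_prop[of st] by (auto simp: stp_eq)

lemma stp_prefix: "\<exists>xs. selL (stp st) = selL st @ xs"
  by (auto simp: stp_eq)

lemma stp_halted: "halted st \<Longrightarrow> stp st = st"
  by (simp add: stp_eq)

lemma stp_halted2: "halted st \<Longrightarrow> halted (stp st)"
  by (simp add: stp_eq)

lemma stp_stopu: "\<not> halted (stp st) \<Longrightarrow> stopu (stp st) = stopu st"
  by (auto simp: stp_eq split: if_splits)

lemma it_rem: "rem ((stp^^n) st) \<subseteq> rem st"
  by (induction n) (use stp_rem in auto)

lemma it_sel: "n \<le> m \<Longrightarrow> finite (rem st) \<Longrightarrow>
   rem ((stp^^m) st) \<union> sel ((stp^^m) st) \<subseteq> rem ((stp^^n) st) \<union> sel ((stp^^n) st)"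
proof (induction m rule: dec_induct)
  case base then show ?case by simp
next
  case (step m)
  have fin: "finite (rem ((stp^^m) st))" using it_rem[of m st] step(4) by (rule finite_subset)
  have "rem ((stp^^Suc m) st) \<union> sel ((stp^^Suc m) st) \<subseteq> rem ((stp^^m) st) \<union> sel ((stp^^m) st)"
    using stp_sel[OF fin] by simp
  then show ?case using step(3)[OF step(4)] by (rule order_trans)
qed

lemma it_prefix: "n \<le> m \<Longrightarrow> \<exists>xs. selL ((stp^^m) st) = selL ((stp^^n) st) @ xs"
proof (induction m rule: dec_induct)
  case base then show ?case by simp
next
  case (step m)
  then show ?case using stp_prefix[of "(stp^^m) st"] by auto
qed

lemma it_halted: "n \<le> m \<Longrightarrow> halted ((stp^^n) st) \<Longrightarrow> (stp^^m) st = (stp^^n) st"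
proof (induction m rule: dec_induct)
  case base then show ?case by simp
next
  case (step m)
  then show ?case using stp_halted[of "(stp^^m) st"] by auto
qed

lemma it_stopu: "stopu st = None \<Longrightarrow> \<not> halted ((stp^^n) st) \<Longrightarrow> stopu ((stp^^n) st) = None"
proof (induction n)
  case 0 then show ?case by simp
next
  case (Suc n)
  then show ?case using stp_stopu[of "(stp^^n) st"] stp_halted2[of "(stp^^n) st"] by auto
qed

lemma sim_step:
  assumes "\<not> halted A" "s \<in> rem A" "finite (rem A)" "pk A \<noteq> s"
  shows "stp (A\<lparr>rem := rem A - {s}\<rparr>) = (stp A)\<lparr>rem := rem (stp A) - {s}\<rparr>"
proof -
  have P: "pk A \<in> rem A \<and> (\<forall>u\<in>rem A. rat A u \<le> rat A (pk A))" using pk_prop assms by auto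
  have E: "(LEAST w. w \<in> rem A - {s} \<and> (\<forall>u\<in>rem A - {s}. rat A u \<le> rat A w)) = pk A"
  proof (rule Least_equality)
    show "pk A \<in> rem A - {s} \<and> (\<forall>u\<in>rem A - {s}. rat A u \<le> rat A (pk A))" using P assms by auto
  next
    fix w assume w: "w \<in> rem A - {s} \<and> (\<forall>u\<in>rem A - {s}. rat A u \<le> rat A w)"
    then have "rat A (pk A) \<le> rat A w" using P assms by auto
    then have "w \<in> rem A \<and> (\<forall>u\<in>rem A. rat A u \<le> rat A w)" using w P by force
    then show "pk A \<le> w" using pk_prop0[of A] assms P by auto
  qed
  have ne: "rem A - {s} \<noteq> {}" using P assms by auto
  have ne2: "rem A \<noteq> {}" using assms by auto
  have E': "pk (A\<lparr>rem := rem A - {s}\<rparr>) = pk A" using E by simp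
  show ?thesis
    unfolding stp_eq[of "A\<lparr>rem := rem A - {s}\<rparr>"] E' stp_eq[of A]
    using assms ne P by (simp add: ne2 Diff_insert2[symmetric] insert_commute)
qed


definition inv2 :: "'w set \<Rightarrow> ('w \<times> real) list \<Rightarrow> 'w mstate \<Rightarrow> bool" where
  "inv2 R0 L0 C \<longleftrightarrow> rem C \<subseteq> R0 \<and> (\<exists>xs. selL C = L0 @ xs) \<and>
    (length L0 < length (selL C) \<longrightarrow> fst (selL C ! length L0) \<in> R0 \<and>
       snd (selL C ! length L0) = cond_gain f D W Obs (fst (selL C ! length L0)) (obs_of r L0)) \<and>
    (length (selL C) = length L0 \<longrightarrow> (case stopu C of None \<Rightarrow> True | Some u \<Rightarrow> u \<in> R0))"

lemma inv_step:
  assumes "finite R0" "inv2 R0 L0 C"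
  shows "inv2 R0 L0 (stp C)"
proof (cases "halted C \<or> rem C = {}")
  case True
  then show ?thesis using assms by (auto simp: stp_eq inv2_def)
next
  case False
  have fin: "finite (rem C)" using assms finite_subset unfolding inv2_def by blast
  have P: "pk C \<in> R0" using pk_prop[OF fin] False assms unfolding inv2_def by blast
  from assms(2) obtain xs where xs: "selL C = L0 @ xs" unfolding inv2_def by blast
  show ?thesis
  proof (cases "length (selL C) = length L0")
    case True
    then have "xs = []" using xs by simp
    then show ?thesis using assms False P xs
      unfolding inv2_def stp_eq by (auto simp: nth_append)
  next
    case F2: False
    then have "length L0 < length (selL C)" using xs by simp
    then show ?thesis using assms False P xs
      unfolding inv2_def stp_eq by (auto simp: nth_append)
  qed
qed


lemma ratio_bound:
  fixes bj bs dj Ds rho :: real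
  assumes "bj > 0" "bs > 0" "dj / bj \<le> Ds / bs" "dj > 0" "bs \<le> rho"
  shows "bs \<le> min (Ds * bj / dj) rho"
proof -
  have "dj * bs \<le> Ds * bj" using assms(1,2,3) by (simp add: divide_simps mult.commute)
  then have "bs \<le> Ds * bj / dj" using assms(4) by (simp add: pos_le_divide_eq mult.commute)
  then show ?thesis using assms(5) by simp
qed

lemma theta_ge:
  assumes finW: "finite W" and bpos: "\<forall>w\<in>W. b w > 0"
    and sS: "s \<in> sel (run f D W Obs b B \<alpha> r W)"
  shows "theta_d f D W Obs b B \<alpha> s r \<ge> b s"
proof -
  define I :: "'w set \<Rightarrow> 'w mstate" where "I C = \<lparr>rem = C, selL = [], halted = False, stopu = None\<rparr>" for C
  define A where "A n = (stp^^n) (I W)" for n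
  define Bs where "Bs n = (stp^^n) (I (W - {s}))" for n
  define N where "N = card W + 1"
  have AN: "s \<in> sel (A N)" using sS by (simp add: run_def A_def I_def N_def)
  have Asuc: "A (Suc n) = stp (A n)" for n by (simp add: A_def)
  have Bsuc: "Bs (Suc n) = stp (Bs n)" for n by (simp add: Bs_def)
  have finA: "finite (rem (A n))" for n
    using it_rem[of n "I W"] finW finite_subset unfolding A_def I_def by fastforce
  have mono: "n \<le> m \<Longrightarrow> rem (A m) \<union> sel (A m) \<subseteq> rem (A n) \<union> sel (A n)" for n m
    using it_sel[of n m "I W"] finW unfolding A_def I_def by simp
  have selW: "rem (A n) \<union> sel (A n) \<subseteq> W" for n
    using mono[of 0 n] by (simp add: A_def I_def)
  have sW: "s \<in> W" using AN selW by blast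
  define n1 where "n1 = (LEAST n. s \<in> sel (A n))"
  have P1: "s \<in> sel (A n1)" unfolding n1_def using AN by (rule LeastI)
  have n1N: "n1 \<le> N" unfolding n1_def using AN by (rule Least_le)
  have n1pos: "n1 \<noteq> 0"
  proof
    assume "n1 = 0"
    with P1 show False by (simp add: A_def I_def)
  qed
  define n0 where "n0 = n1 - 1"
  have n01: "Suc n0 = n1" using n1pos n0_def by simp
  have notP: "n \<le> n0 \<Longrightarrow> s \<notin> sel (A n)" for n
    using not_less_Least[of n "\<lambda>n. s \<in> sel (A n)"] n01 unfolding n1_def by auto
  have inrem: "n \<le> n0 \<Longrightarrow> s \<in> rem (A n)" for n
    using mono[of n N] AN notP[of n] n01 n1N by force
  have nh: "n \<le> n0 \<Longrightarrow> \<not> halted (A n)" for n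
  proof
    assume h: "n \<le> n0" "halted (A n)"
    then have "A N = A n" using it_halted[of n N "I W"] n01 n1N unfolding A_def by simp
    then show False using AN notP h by simp
  qed
  have sim: "n \<le> n0 \<Longrightarrow> Bs n = (A n)\<lparr>rem := rem (A n) - {s}\<rparr>" for n
  proof (induction n)
    case 0 then show ?case by (simp add: Bs_def A_def I_def)
  next
    case (Suc n)
    have pkne: "pk (A n) \<noteq> s"
    proof
      assume pe: "pk (A n) = s"
      have "s \<in> rem (A (Suc n))" "\<not> halted (A (Suc n))" "s \<notin> sel (A (Suc n))"
        using inrem nh notP Suc by auto
      then show False using pe nh[of n] Suc unfolding Asuc stp_eq by (auto split: if_splits)
    qed
    have "Bs (Suc n) = stp ((A n)\<lparr>rem := rem (A n) - {s}\<rparr>)" using Suc Bsuc by simp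
    also have "\<dots> = (A (Suc n))\<lparr>rem := rem (A (Suc n)) - {s}\<rparr>"
      unfolding Asuc using sim_step[of "A n" s] nh inrem finA pkne Suc by simp
    finally show ?case .
  qed
  define A0 where "A0 = A n0"
  have s1: "s \<in> sel (stp A0)" using P1 n01 Asuc A0_def by metis
  have s0: "s \<notin> sel A0" "\<not> halted A0" "s \<in> rem A0" using notP nh inrem A0_def by auto
  have finA0: "finite (rem A0)" using finA A0_def by simp
  have cond: "pk A0 = s \<and> b s \<le> B / \<alpha> * (dg A0 s / (sum_list (map snd (selL A0)) + dg A0 s))"
    using s1 s0 unfolding stp_eq by (auto split: if_splits)
  have maxs: "\<forall>u\<in>rem A0. rat A0 u \<le> rat A0 s"
    using pk_prop[OF finA0] s0 cond by auto
  have stop0: "stopu A0 = None"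
    using it_stopu[of "I W" n0] s0 unfolding A0_def A_def I_def by simp
  define L0 where "L0 = selL A0"
  define R0 where "R0 = rem A0 - {s}"
  have finR0: "finite R0" using finA0 R0_def by simp
  have inv0: "inv2 R0 L0 (Bs n0)"
    using sim[of n0] stop0 unfolding inv2_def L0_def R0_def A0_def by simp
  have invm: "n0 \<le> m \<Longrightarrow> inv2 R0 L0 (Bs m)" for m
  proof (induction m rule: dec_induct)
    case base then show ?case using inv0 .
  next
    case (step m) then show ?case using inv_step[OF finR0] Bsuc by simp
  qed
  have cardW: "card (W - {s}) + 1 = card W" using sW finW
    by (metis One_nat_def Suc_pred card_Diff_singleton card_gt_0_iff empty_iff Suc_eq_plus1)
  define Bf where "Bf = run f D W Obs b B \<alpha> r (W - {s})"
  have BfBs: "Bf = Bs (card W)" unfolding Bf_def Bs_def run_def I_def using cardW by simp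
  have invf: "inv2 R0 L0 Bf" using invm[of "card W"] BfBs n01 n1N N_def by simp
  obtain xs where xs: "selL Bf = L0 @ xs" using invf unfolding inv2_def by blast
  define k where "k = length (selL Bf)"
  define m0 where "m0 = length L0"
  define cg where "cg w = cond_gain f D W Obs w (obs_of r L0)" for w
  have m0k: "m0 \<le> k" using xs k_def m0_def by simp
  have tk: "take m0 (selL Bf) = L0" using xs m0_def by simp
  have rho: "b s \<le> B / \<alpha> * (cg s / (sum_list (map snd L0) + cg s))"
    using cond unfolding cg_def L0_def by simp
  have ratj: "j \<in> R0 \<Longrightarrow> cg j / b j \<le> cg s / b s" for j
    using maxs s0 unfolding R0_def cg_def L0_def by auto
  have bj: "j \<in> R0 \<Longrightarrow> b j > 0" for j
    using selW[of n0] bpos unfolding R0_def A0_def by auto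
  have bs: "b s > 0" using bpos sW by auto
  define rh where "rh m = B / \<alpha> * (cond_gain f D W Obs s (obs_of r (take m (selL Bf))) /
      (sum_list (map snd (take m (selL Bf))) + cond_gain f D W Obs s (obs_of r (take m (selL Bf)))))" for m
  define th where "th = (\<lambda>m. case (if m < k then Some (selL Bf ! m)
                    else (case stopu Bf of None \<Rightarrow> None
                          | Some u \<Rightarrow> Some (u, cond_gain f D W Obs u (obs_of r (take k (selL Bf)))))) of
                      None \<Rightarrow> rh m
                    | Some (j, dj) \<Rightarrow> (if dj > 0 then min (cond_gain f D W Obs s (obs_of r (take m (selL Bf))) * b j / dj) (rh m) else rh m))"
  have thd: "theta_d f D W Obs b B \<alpha> s r = Max (th ` {0..k})"
    unfolding theta_d_def Let_def th_def k_def Bf_def rh_def by simp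
  have rh0: "rh m0 = B / \<alpha> * (cg s / (sum_list (map snd L0) + cg s))"
    unfolding rh_def tk cg_def by simp
  have key: "b s \<le> th m0"
  proof (cases "m0 < k")
    case True
    obtain j dj where jd: "selL Bf ! m0 = (j, dj)" by (cases "selL Bf ! m0")
    have jR: "j \<in> R0" and djv: "dj = cg j"
      using invf True jd unfolding inv2_def k_def m0_def cg_def by auto
    have th0: "th m0 = (if dj > 0 then min (cg s * b j / dj) (rh m0) else rh m0)"
      unfolding th_def using True jd by (simp add: tk cg_def)
    show ?thesis
    proof (cases "dj > 0")
      case True
      then show ?thesis using th0 ratio_bound[of "b j" "b s" dj "cg s" "rh m0"] bj[OF jR] bs
        ratj[OF jR] djv rho rh0 by simp
    next
      case False then show ?thesis using th0 rho rh0 by simp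
    qed
  next
    case False
    then have mk: "m0 = k" using m0k by simp
    then have tk2: "take k (selL Bf) = L0" using tk by simp
    show ?thesis
    proof (cases "stopu Bf")
      case None
      then have "th m0 = rh m0" unfolding th_def using mk by simp
      then show ?thesis using rho rh0 by simp
    next
      case (Some u)
      then have uR: "u \<in> R0" using invf mk unfolding inv2_def k_def m0_def by auto
      have th0: "th m0 = (if cg u > 0 then min (cg s * b u / cg u) (rh m0) else rh m0)"
        unfolding th_def using mk Some by (simp add: tk tk2 cg_def)
      show ?thesis
      proof (cases "cg u > 0")
        case True
        then show ?thesis using th0 ratio_bound[of "b u" "b s" "cg u" "cg s" "rh m0"] bj[OF uR] bs
          ratj[OF uR] rho rh0 by simp
      next
        case False then show ?thesis using th0 rho rh0 by simp
      qed
    qed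
  qed
  have "th m0 \<le> Max (th ` {0..k})" by (rule Max_ge) (use m0k in auto)
  then show ?thesis using key thd by simp
qed

end

lemma obs_of_cong: "(\<forall>w\<in>fst ` set L. r w = y w) \<Longrightarrow> obs_of r L = obs_of y L"
  by (auto simp: obs_of_def fun_eq_iff)

lemma step_cong:
  assumes "\<forall>w\<in>fst ` set (selL st). r w = y w"
  shows "greedy_step f D W Obs b B \<alpha> r st = greedy_step f D W Obs b B \<alpha> y st"
  using obs_of_cong[OF assms] unfolding greedy_step_def Let_def by simp

lemma run_cong:
  assumes "\<forall>w\<in>fst ` set (selL (run f D W Obs b B \<alpha> y C)). r w = y w"
  shows "run f D W Obs b B \<alpha> r C = run f D W Obs b B \<alpha> y C"
proof -
  define I :: "'a mstate" where "I = \<lparr>rem = C, selL = [], halted = False, stopu = None\<rparr>"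
  define N where "N = card C + 1"
  have ag: "\<forall>w\<in>fst ` set (selL ((greedy_step f D W Obs b B \<alpha> y ^^ N) I)). r w = y w"
    using assms unfolding run_def I_def N_def by simp
  have "n \<le> N \<Longrightarrow> (greedy_step f D W Obs b B \<alpha> r ^^ n) I = (greedy_step f D W Obs b B \<alpha> y ^^ n) I" for n
  proof (induction n)
    case 0 then show ?case by simp
  next
    case (Suc n)
    obtain xs where "selL ((greedy_step f D W Obs b B \<alpha> y ^^ N) I) = selL ((greedy_step f D W Obs b B \<alpha> y ^^ n) I) @ xs"
      using it_prefix[of n N f D W Obs b B \<alpha> y I] Suc by auto
    then have "\<forall>w\<in>fst ` set (selL ((greedy_step f D W Obs b B \<alpha> y ^^ n) I)). r w = y w"
      using ag by auto
    then show ?case using Suc step_cong by simp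
  qed
  then show ?thesis unfolding run_def I_def[symmetric] N_def[symmetric] by simp
qed


theorem theorem2:
  fixes V :: "'v set" and f :: "'v set \<Rightarrow> real" and W :: "'w::linorder set"
    and Obs :: "'v set set" and D :: "'w \<Rightarrow> 'v set pmf" and b :: "'w \<Rightarrow> real"
    and B \<alpha> :: real and y :: "'w \<Rightarrow> 'v set"
  assumes "finite V" and "finite W" and "Obs \<subseteq> Pow V"
    and "monotone_set_fun V f" and "submodular V f" and "\<forall>A\<subseteq>V. f A \<ge> 0"
    and "\<forall>w\<in>W. set_pmf (D w) \<subseteq> Obs"
    and "\<forall>w\<in>W. b w > 0"
    and "B > 0" and "\<alpha> \<ge> 1"
    and "y \<in> realizations W Obs" and "\<forall>w\<in>W. pmf (D w) (y w) > 0"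
  shows "\<forall>s \<in> fst ` set (selL (run f D W Obs b B \<alpha> y W)). payment f D W Obs b B \<alpha> s y \<ge> b s"
proof
  fix s assume sS: "s \<in> fst ` set (selL (run f D W Obs b B \<alpha> y W))"
  define ob where "ob = obs_of y (selL (run f D W Obs b B \<alpha> y W))"
  define R where "R = {r\<in>realizations W Obs. consistent ob r}"
  define den where "den = (\<Sum>r\<in>R. real_prob D W r)"
  have finObs: "finite Obs" using assms(1,3) finite_subset by blast
  have finReal: "finite (realizations W Obs)"
  proof -
    have "realizations W Obs = {r. \<forall>x. (x \<in> W \<longrightarrow> r x \<in> Obs) \<and> (x \<notin> W \<longrightarrow> r x = {})}"
      unfolding realizations_def by auto
    then show ?thesis using finite_set_of_finite_funs[OF assms(2) finObs] by simp
  qed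
  have finR: "finite R" unfolding R_def using finReal by simp
  have rp_nonneg: "real_prob D W r \<ge> 0" for r unfolding real_prob_def by (simp add: prod_nonneg)
  have yR: "y \<in> R" unfolding R_def ob_def consistent_def obs_of_def using assms(11)
    by (auto split: if_splits)
  have yp: "real_prob D W y > 0" unfolding real_prob_def using assms(12) by (simp add: prod_pos)
  have denpos: "den > 0"
  proof -
    have "real_prob D W y \<le> den" unfolding den_def
      using member_le_sum[of y R "real_prob D W"] yR finR rp_nonneg by simp
    then show ?thesis using yp by simp
  qed
  have cp: "r \<in> R \<Longrightarrow> cond_prob D W Obs ob (\<lambda>x. x = r) = real_prob D W r / den" for r
  proof -
    assume rR: "r \<in> R"
    then have seteq: "{r' \<in> realizations W Obs. consistent ob r' \<and> r' = r} = {r}" unfolding R_def by auto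
    have "cond_prob D W Obs ob (\<lambda>x. x = r) = (\<Sum>r'\<in>{r}. real_prob D W r') / den"
      unfolding cond_prob_def den_def R_def seteq by (rule refl)
    then show ?thesis by simp
  qed
  have th: "r \<in> R \<Longrightarrow> theta_d f D W Obs b B \<alpha> s r \<ge> b s" for r
  proof -
    assume rR: "r \<in> R"
    have "\<forall>w\<in>fst ` set (selL (run f D W Obs b B \<alpha> y W)). r w = y w"
    proof
      fix w assume w: "w \<in> fst ` set (selL (run f D W Obs b B \<alpha> y W))"
      then have ow: "ob w = Some (y w)" unfolding ob_def obs_of_def by simp
      then have "w \<in> dom ob" by auto
      then have "ob w = Some (r w)" using rR unfolding R_def consistent_def by blast
      then show "r w = y w" using ow by simp
    qed
    then have "run f D W Obs b B \<alpha> r W = run f D W Obs b B \<alpha> y W" by (rule run_cong)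
    then have "s \<in> fst ` set (selL (run f D W Obs b B \<alpha> r W))" using sS by simp
    then show ?thesis by (rule theta_ge[OF assms(2) assms(8)])
  qed
  have "(\<Sum>r\<in>R. cond_prob D W Obs ob (\<lambda>x. x = r) * b s)
      \<le> (\<Sum>r\<in>R. cond_prob D W Obs ob (\<lambda>x. x = r) * theta_d f D W Obs b B \<alpha> s r)"
  proof (rule sum_mono)
    fix r assume rR: "r \<in> R"
    have "cond_prob D W Obs ob (\<lambda>x. x = r) \<ge> 0" using cp[OF rR] rp_nonneg denpos by simp
    then show "cond_prob D W Obs ob (\<lambda>x. x = r) * b s \<le> cond_prob D W Obs ob (\<lambda>x. x = r) * theta_d f D W Obs b B \<alpha> s r"
      using th[OF rR] by (simp add: mult_left_mono)
  qed
  moreover have "(\<Sum>r\<in>R. cond_prob D W Obs ob (\<lambda>x. x = r) * b s) = b s"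
  proof -
    have "(\<Sum>r\<in>R. cond_prob D W Obs ob (\<lambda>x. x = r) * b s) = (\<Sum>r\<in>R. real_prob D W r / den * b s)"
      using cp by simp
    also have "\<dots> = (\<Sum>r\<in>R. real_prob D W r) / den * b s"
      by (simp add: sum_divide_distrib sum_distrib_right)
    also have "\<dots> = b s" using denpos den_def by simp
    finally show ?thesis .
  qed
  moreover have "payment f D W Obs b B \<alpha> s y =
      (\<Sum>r\<in>R. cond_prob D W Obs ob (\<lambda>x. x = r) * theta_d f D W Obs b B \<alpha> s r)"
    unfolding payment_def Let_def ob_def R_def by (rule refl)
  ultimately show "payment f D W Obs b B \<alpha> s y \<ge> b s" by linarith
qed

end
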